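(* Let $L_{\max}\ge 2$ be an integer and let $\mu_1,\dots,\mu_{L_{\max}}$ be real constants satisfying $\mu_t\ge \mu_{\min}$ for all $t\in\{1,\dots,L_{\max}\}$, for some $\mu_{\min}>0$. For $\theta\in\mathbb{R}$ let $p=\sigma(\theta)$, where $\sigma(x)=1/(1+e^{-x})$, and define $$J(\theta)=\sum_{t=1}^{L_{\max}}\mu_t\,(1-\sigma(\theta))^{t-1}.$$ Let $\theta(s)$, $s\ge 0$, be the solution of the gradient-flow ODE $\frac{d\theta(s)}{ds}=J'(\theta(s))$, $\theta(0)=\theta_0\in\mathbb{R}$, and set $p(s)=\sigma(\theta(s))$. Then: (1) $p(s)$ is strictly decreasing in $s$ and $p(s)\to 0$ as $s\to\infty$; (2) there exist constants $S,K>0$ such that $p(s)\le K/s$ for all $s\ge S$. Consequently, the expected path length $\mathbb{E}[\tau]=\sum_{t=1}^{L_{\max}}(1-p(s))^{t-1}$ converges to $L_{\max}$ as $s\to\infty$.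
   Context: Stylized model of a path-generating policy that only makes continue/stop decisions: at each step $t\in\{1,\dots,L_{\max}\}$ the policy stops with the position-independent probability $p=\sigma(\theta)$, and $\tau\le L_{\max}$ denotes the stopping time (path length), so $\mathbb{P}(\tau\ge t)=(1-p)^{t-1}$. The total return is $G=\sum_{t=1}^{\tau}r_t$ with step rewards $r_t$, and $\mu_t:=\mathbb{E}[r_t\mid \tau\ge t]$ is assumed not to depend on $\theta$; then $J(\theta)=\mathbb{E}[G]=\sum_{t=1}^{L_{\max}}\mu_t(1-p)^{t-1}$, which is the function defined in the claim. The hypothesis $\mu_t\ge\mu_{\min}>0$ expresses that the expected step-level reward is positive at every step. *)

theory Defs
  imports "HOL-Analysis.Analysis"
begin

definition sigmoid :: "real \<Rightarrow> real" where
  "sigmoid x = 1 / (1 + exp (- x))"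

definition Jret :: "nat \<Rightarrow> (nat \<Rightarrow> real) \<Rightarrow> real \<Rightarrow> real" where
  "Jret Lmax \<mu> \<theta> = (\<Sum>t = 1..Lmax. \<mu> t * (1 - sigmoid \<theta>) ^ (t - 1))"

definition exp_len :: "nat \<Rightarrow> real \<Rightarrow> real" where
  "exp_len Lmax p = (\<Sum>t = 1..Lmax. (1 - p) ^ (t - 1))"

end

theory Submission
  imports Defs
begin

lemma sig_pos: "sigmoid x > 0" "sigmoid x < 1"
  unfolding sigmoid_def by (auto simp: divide_simps add_pos_pos)

lemma one_minus_sig: "1 - sigmoid x = exp (- x) / (1 + exp (- x))"
proof -
  have "1 + exp (- x) > 0" by (simp add: add_pos_pos)
  then show ?thesis unfolding sigmoid_def by (simp add: field_simps)
qed

lemma sig_strict_mono: "x < y \<Longrightarrow> sigmoid x < sigmoid y"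
  unfolding sigmoid_def by (auto simp: divide_simps add_pos_pos)

lemma sig_deriv: "(sigmoid has_real_derivative sigmoid x * (1 - sigmoid x)) (at x)"
proof -
  have "((\<lambda>x. 1 / (1 + exp (- x))) has_real_derivative
        - (exp (- x) * (-1)) / ((1 + exp (- x)) * (1 + exp (- x)))) (at x)"
    by (rule derivative_eq_intros refl | simp add: add_pos_pos add_nonneg_eq_0_iff)+
  moreover have "- (exp (- x) * (-1)) / ((1 + exp (- x)) * (1 + exp (- x))) = sigmoid x * (1 - sigmoid x)"
    unfolding one_minus_sig by (simp add: sigmoid_def divide_simps)
  ultimately show ?thesis unfolding sigmoid_def[abs_def] by simp
qed

definition DJ :: "nat \<Rightarrow> (nat \<Rightarrow> real) \<Rightarrow> real \<Rightarrow> real" where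
  "DJ L \<mu> x = (\<Sum>t = 1..L. \<mu> t * (real (t - 1) * (1 - sigmoid x) ^ (t - 1 - 1) *
        (- (sigmoid x * (1 - sigmoid x)))))"

lemma J_deriv: "(Jret L \<mu> has_real_derivative DJ L \<mu> x) (at x)"
  unfolding Jret_def[abs_def] DJ_def
  apply (rule derivative_eq_intros sig_deriv refl)+
  apply (intro sum.cong refl)
  apply (simp add: algebra_simps)
  done

lemma deriv_J: "deriv (Jret L \<mu>) x = DJ L \<mu> x"
  using J_deriv DERIV_imp_deriv by blast

lemma DJ_bound:
  assumes "L \<ge> 2" "\<mu>min > 0" "\<And>t. t \<in> {1..L} \<Longrightarrow> \<mu> t \<ge> \<mu>min"
  shows "- DJ L \<mu> x \<ge> \<mu>min * sigmoid x * (1 - sigmoid x)"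
proof -
  define p where "p = sigmoid x"
  have p: "0 < p" "p < 1" using sig_pos p_def by auto
  define f where "f t = \<mu> t * (real (t - 1) * (1 - p) ^ (t - 1 - 1) * (p * (1 - p)))" for t
  have "- DJ L \<mu> x = (\<Sum>t = 1..L. f t)"
    unfolding DJ_def f_def p_def sum_negf[symmetric] by (intro sum.cong refl) (simp add: algebra_simps)
  moreover have "f 2 \<le> (\<Sum>t = 1..L. f t)"
  proof (rule member_le_sum)
    show "2 \<in> {1..L}" using assms by auto
    fix t assume "t \<in> {1..L} - {2}"
    then have "\<mu> t \<ge> \<mu>min" using assms by auto
    then show "0 \<le> f t" unfolding f_def using p assms
      by (intro mult_nonneg_nonneg) auto
  qed auto
  moreover have "f 2 \<ge> \<mu>min * p * (1 - p)"
    using assms(3)[of 2] assms(1) p unfolding f_def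
    by (auto intro!: mult_right_mono simp: mult.assoc)
  ultimately show ?thesis unfolding p_def by linarith
qed

theorem theoremA1:
  fixes Lmax :: nat and \<mu> :: "nat \<Rightarrow> real" and \<mu>min :: real
    and \<theta> :: "real \<Rightarrow> real" and \<theta>0 :: real
  assumes "Lmax \<ge> 2"
    and "\<mu>min > 0"
    and "\<And>t. t \<in> {1..Lmax} \<Longrightarrow> \<mu> t \<ge> \<mu>min"
    and "\<And>s. s \<ge> 0 \<Longrightarrow>
           (\<theta> has_real_derivative deriv (Jret Lmax \<mu>) (\<theta> s)) (at s within {0..})"
    and "\<theta> 0 = \<theta>0"
  shows "strict_antimono_on {0..} (\<lambda>s. sigmoid (\<theta> s))
       \<and> ((\<lambda>s. sigmoid (\<theta> s)) \<longlongrightarrow> 0) at_top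
       \<and> (\<exists>S K. S > 0 \<and> K > 0 \<and> (\<forall>s\<ge>S. sigmoid (\<theta> s) \<le> K / s))
       \<and> ((\<lambda>s. exp_len Lmax (sigmoid (\<theta> s))) \<longlongrightarrow> real Lmax) at_top"
proof -
  have dw: "(\<theta> has_real_derivative DJ Lmax \<mu> (\<theta> s)) (at s within {0..})" if "s \<ge> 0" for s
    using assms(4)[OF that] unfolding deriv_J .
  have da: "(\<theta> has_real_derivative DJ Lmax \<mu> (\<theta> s)) (at s)" if "s > 0" for s
  proof -
    have "(\<theta> has_real_derivative DJ Lmax \<mu> (\<theta> s)) (at s within {0<..})"
      by (rule DERIV_subset[OF dw[OF less_imp_le[OF that]]]) auto
    then show ?thesis using at_within_open[of s "{0<..}"] that by auto
  qed
  have cont: "continuous_on {0..} \<theta>"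
    using dw by (intro DERIV_continuous_on) auto
  have neg: "DJ Lmax \<mu> y < 0" for y
  proof -
    have "\<mu>min * sigmoid y * (1 - sigmoid y) > 0"
      using assms(2) sig_pos[of y] by auto
    then show ?thesis using DJ_bound[of Lmax \<mu>min \<mu> y, OF assms(1-3)] by linarith
  qed
  have dec: "\<theta> b < \<theta> a" if "0 \<le> a" "a < b" for a b
  proof (rule DERIV_neg_imp_decreasing_open[OF that(2)])
    show "continuous_on {a..b} \<theta>" by (rule continuous_on_subset[OF cont]) (use that in auto)
    fix x assume "a < x" "x < b"
    then show "\<exists>y. DERIV \<theta> x :> y \<and> y < 0" using da[of x] neg that by auto
  qed
  have part1: "strict_antimono_on {0..} (\<lambda>s. sigmoid (\<theta> s))"
  proof (rule monotone_onI)
    fix a b :: real assume "a \<in> {0..}" "b \<in> {0..}" "a < b"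
    then show "sigmoid (\<theta> b) < sigmoid (\<theta> a)" using dec[of a b] sig_strict_mono by simp
  qed
  have le0: "\<theta> s \<le> \<theta>0" if "s \<ge> 0" for s
    using dec[of 0 s] that assms(5) by (cases "s = 0") auto
  define c where "c = \<mu>min * (1 - sigmoid \<theta>0) ^ 2"
  have cpos: "c > 0" unfolding c_def using assms(2) sig_pos[of \<theta>0] by auto
  define g where "g s = exp (- \<theta> s) - c * s" for s
  have gmono: "g 0 \<le> g b" if "b \<ge> 0" for b
  proof (rule DERIV_nonneg_imp_increasing_open[OF that])
    have cb: "continuous_on {0..b} \<theta>" using cont by (rule continuous_on_subset) auto
    show "continuous_on {0..b} g" unfolding g_def
      by (intro continuous_intros cb)
    fix x assume x: "0 < x" "x < b"
    let ?y = "exp (- \<theta> x) * (- DJ Lmax \<mu> (\<theta> x)) - c"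
    have d1: "((\<lambda>s. - \<theta> s) has_real_derivative - DJ Lmax \<mu> (\<theta> x)) (at x)"
      using DERIV_minus[OF da[OF x(1)]] .
    have d2: "((\<lambda>s. exp (- \<theta> s)) has_real_derivative exp (- \<theta> x) * (- DJ Lmax \<mu> (\<theta> x))) (at x)"
      using DERIV_fun_exp[OF d1] .
    have d3: "((\<lambda>s. c * s) has_real_derivative c) (at x)"
      using DERIV_cmult[OF DERIV_ident, of c x] by simp
    have "DERIV g x :> ?y" unfolding g_def
      using DERIV_diff[OF d2 d3] .
    moreover have "?y \<ge> 0"
    proof -
      let ?p = "sigmoid (\<theta> x)"
      have e: "exp (- \<theta> x) * ?p = 1 - ?p"
        unfolding one_minus_sig by (simp add: sigmoid_def)
      have "exp (- \<theta> x) * (- DJ Lmax \<mu> (\<theta> x)) \<ge> exp (- \<theta> x) * (\<mu>min * ?p * (1 - ?p))"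
        using DJ_bound[of Lmax \<mu>min \<mu> "\<theta> x", OF assms(1-3)] by (intro mult_left_mono) auto
      also have "exp (- \<theta> x) * (\<mu>min * ?p * (1 - ?p)) = \<mu>min * (1 - ?p) ^ 2"
      proof -
        have "exp (- \<theta> x) * (\<mu>min * ?p * (1 - ?p)) = \<mu>min * (1 - ?p) * (exp (- \<theta> x) * ?p)"
          by (simp only: mult_ac)
        then show ?thesis using e by (simp add: power2_eq_square)
      qed
      also have "\<mu>min * (1 - ?p) ^ 2 \<ge> c"
      proof -
        have "sigmoid (\<theta> x) \<le> sigmoid \<theta>0"
          using le0[of x] x sig_strict_mono[of "\<theta> x" \<theta>0] by (cases "\<theta> x = \<theta>0") auto
        then have "(1 - sigmoid \<theta>0) ^ 2 \<le> (1 - ?p) ^ 2"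
          using sig_pos[of \<theta>0] by (intro power_mono) auto
        then show ?thesis unfolding c_def using assms(2) by auto
      qed
      finally show ?thesis by linarith
    qed
    ultimately show "\<exists>y. DERIV g x :> y \<and> y \<ge> 0" by blast
  qed
  have bound: "sigmoid (\<theta> s) \<le> (1 / c) / s" if "s \<ge> 1" for s
  proof -
    have "g 0 \<le> g s" using gmono that by auto
    then have "exp (- \<theta> s) \<ge> c * s" unfolding g_def
      using exp_gt_zero[of "- \<theta> 0"] by linarith
    then have "1 + exp (- \<theta> s) \<ge> c * s" by auto
    moreover have "c * s > 0" using cpos that by auto
    ultimately have "1 / (1 + exp (- \<theta> s)) \<le> 1 / (c * s)"
      by (intro divide_left_mono) auto
    then show ?thesis unfolding sigmoid_def by simp
  qed
  have part3: "\<exists>S K. S > 0 \<and> K > 0 \<and> (\<forall>s\<ge>S. sigmoid (\<theta> s) \<le> K / s)"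
    using bound cpos by (intro exI[of _ 1] exI[of _ "1/c"]) auto
  have part2: "((\<lambda>s. sigmoid (\<theta> s)) \<longlongrightarrow> 0) at_top"
  proof (rule tendsto_sandwich[of "\<lambda>_. 0" _ _ "\<lambda>s. (1/c) / s"])
    show "\<forall>\<^sub>F n in at_top. 0 \<le> sigmoid (\<theta> n)" by (rule always_eventually) (simp add: less_imp_le[OF sig_pos(1)])
    show "\<forall>\<^sub>F n in at_top. sigmoid (\<theta> n) \<le> 1 / c / n"
      using eventually_ge_at_top[of "1::real"] by (rule eventually_mono) (rule bound)
    show "((\<lambda>s. 1 / c / s) \<longlongrightarrow> 0) at_top"
      by (intro tendsto_divide_0[OF tendsto_const] filterlim_at_top_imp_at_infinity filterlim_ident)
  qed auto
  have part4: "((\<lambda>s. exp_len Lmax (sigmoid (\<theta> s))) \<longlongrightarrow> real Lmax) at_top"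
  proof -
    have "((\<lambda>s. exp_len Lmax (sigmoid (\<theta> s))) \<longlongrightarrow> exp_len Lmax 0) at_top"
      unfolding exp_len_def by (intro tendsto_sum tendsto_power tendsto_diff tendsto_const part2)
    moreover have "exp_len Lmax 0 = real Lmax" unfolding exp_len_def by simp
    ultimately show ?thesis by simp
  qed
  show ?thesis using part1 part2 part3 part4 by blast
qed

end
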